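(* Let $R=\mathbb{Z}[a]$, let $\Gamma$ be the ring defined below, and let \[ \Psi = Q_0Q_0 +a\,Q_0Q_1 -2\,Q_1Q_1 +a^2\,Q_0Q_2 -2a\,Q_1Q_2 +4\,Q_2Q_2\in\Gamma. \] Then $\Psi$ lies in the center of $\Gamma$.
   Context: $R=\mathbb{Z}[a]$ is a polynomial ring. $\Gamma$ is the associative ring equipped with a ring homomorphism $\eta\colon R\to\Gamma$, generated over $R$ by $Q_0,Q_1,Q_2$ subject to: (i) commutation relations: the $Q_i$ commute with elements of $\mathbb{Z}\subset R$, and $Q_0\,a = a^2Q_0-2aQ_1+6Q_2$, $Q_1\,a=3Q_0+aQ_2$, $Q_2\,a=-aQ_0+3Q_1$; (ii) adem relations: $Q_1Q_0=2Q_2Q_1-2Q_0Q_2$ and $Q_2Q_0=Q_0Q_1+aQ_0Q_2-2Q_1Q_2$. *)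

theory Defs
  imports Main
begin

inductive_set gen_ring :: "'a::ring_1 set \<Rightarrow> 'a set" for S :: "'a set" where
  gen_base: "x \<in> S \<Longrightarrow> x \<in> gen_ring S"
| gen_one: "1 \<in> gen_ring S"
| gen_add: "x \<in> gen_ring S \<Longrightarrow> y \<in> gen_ring S \<Longrightarrow> x + y \<in> gen_ring S"
| gen_neg: "x \<in> gen_ring S \<Longrightarrow> - x \<in> gen_ring S"
| gen_mult: "x \<in> gen_ring S \<Longrightarrow> y \<in> gen_ring S \<Longrightarrow> x * y \<in> gen_ring S"

definition ring_center :: "'a::ring_1 set" where
  "ring_center = {z. \<forall>x. z * x = x * z}"

end

theory Submission
  imports Defs
begin

lemma num_comm: "numeral n * ((x::'a::ring_1) * y) = x * (numeral n * y)"
  by (metis mult.assoc mult_of_nat_commute of_nat_numeral)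

lemma canc:
  fixes y n r :: "'a::ring_1"
  assumes "n = - y"
  shows "a0 * (y) + a0 * (n) = 0" "a0 * (n) + a0 * (y) = 0" "a0 * (y) + (a0 * (n) + r) = r" "a0 * (n) + (a0 * (y) + r) = r"
   "a0 * (a1 * (y)) + a0 * (a1 * (n)) = 0" "a0 * (a1 * (n)) + a0 * (a1 * (y)) = 0" "a0 * (a1 * (y)) + (a0 * (a1 * (n)) + r) = r" "a0 * (a1 * (n)) + (a0 * (a1 * (y)) + r) = r"
   "a0 * (a1 * (a2 * (y))) + a0 * (a1 * (a2 * (n))) = 0" "a0 * (a1 * (a2 * (n))) + a0 * (a1 * (a2 * (y))) = 0" "a0 * (a1 * (a2 * (y))) + (a0 * (a1 * (a2 * (n))) + r) = r" "a0 * (a1 * (a2 * (n))) + (a0 * (a1 * (a2 * (y))) + r) = r"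
   "a0 * (a1 * (a2 * (a3 * (y)))) + a0 * (a1 * (a2 * (a3 * (n)))) = 0" "a0 * (a1 * (a2 * (a3 * (n)))) + a0 * (a1 * (a2 * (a3 * (y)))) = 0" "a0 * (a1 * (a2 * (a3 * (y)))) + (a0 * (a1 * (a2 * (a3 * (n)))) + r) = r" "a0 * (a1 * (a2 * (a3 * (n)))) + (a0 * (a1 * (a2 * (a3 * (y)))) + r) = r"
   "a0 * (a1 * (a2 * (a3 * (a4 * (y))))) + a0 * (a1 * (a2 * (a3 * (a4 * (n))))) = 0" "a0 * (a1 * (a2 * (a3 * (a4 * (n))))) + a0 * (a1 * (a2 * (a3 * (a4 * (y))))) = 0" "a0 * (a1 * (a2 * (a3 * (a4 * (y))))) + (a0 * (a1 * (a2 * (a3 * (a4 * (n))))) + r) = r" "a0 * (a1 * (a2 * (a3 * (a4 * (n))))) + (a0 * (a1 * (a2 * (a3 * (a4 * (y))))) + r) = r"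
   "a0 * (a1 * (a2 * (a3 * (a4 * (a5 * (y)))))) + a0 * (a1 * (a2 * (a3 * (a4 * (a5 * (n)))))) = 0" "a0 * (a1 * (a2 * (a3 * (a4 * (a5 * (n)))))) + a0 * (a1 * (a2 * (a3 * (a4 * (a5 * (y)))))) = 0" "a0 * (a1 * (a2 * (a3 * (a4 * (a5 * (y)))))) + (a0 * (a1 * (a2 * (a3 * (a4 * (a5 * (n)))))) + r) = r" "a0 * (a1 * (a2 * (a3 * (a4 * (a5 * (n)))))) + (a0 * (a1 * (a2 * (a3 * (a4 * (a5 * (y)))))) + r) = r"
   "a0 * (a1 * (a2 * (a3 * (a4 * (a5 * (a6 * (y))))))) + a0 * (a1 * (a2 * (a3 * (a4 * (a5 * (a6 * (n))))))) = 0" "a0 * (a1 * (a2 * (a3 * (a4 * (a5 * (a6 * (n))))))) + a0 * (a1 * (a2 * (a3 * (a4 * (a5 * (a6 * (y))))))) = 0" "a0 * (a1 * (a2 * (a3 * (a4 * (a5 * (a6 * (y))))))) + (a0 * (a1 * (a2 * (a3 * (a4 * (a5 * (a6 * (n))))))) + r) = r" "a0 * (a1 * (a2 * (a3 * (a4 * (a5 * (a6 * (n))))))) + (a0 * (a1 * (a2 * (a3 * (a4 * (a5 * (a6 * (y))))))) + r) = r"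
   "a0 * (a1 * (a2 * (a3 * (a4 * (a5 * (a6 * (a7 * (y)))))))) + a0 * (a1 * (a2 * (a3 * (a4 * (a5 * (a6 * (a7 * (n)))))))) = 0" "a0 * (a1 * (a2 * (a3 * (a4 * (a5 * (a6 * (a7 * (n)))))))) + a0 * (a1 * (a2 * (a3 * (a4 * (a5 * (a6 * (a7 * (y)))))))) = 0" "a0 * (a1 * (a2 * (a3 * (a4 * (a5 * (a6 * (a7 * (y)))))))) + (a0 * (a1 * (a2 * (a3 * (a4 * (a5 * (a6 * (a7 * (n)))))))) + r) = r" "a0 * (a1 * (a2 * (a3 * (a4 * (a5 * (a6 * (a7 * (n)))))))) + (a0 * (a1 * (a2 * (a3 * (a4 * (a5 * (a6 * (a7 * (y)))))))) + r) = r"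
   "a0 * (a1 * (a2 * (a3 * (a4 * (a5 * (a6 * (a7 * (a8 * (y))))))))) + a0 * (a1 * (a2 * (a3 * (a4 * (a5 * (a6 * (a7 * (a8 * (n))))))))) = 0" "a0 * (a1 * (a2 * (a3 * (a4 * (a5 * (a6 * (a7 * (a8 * (n))))))))) + a0 * (a1 * (a2 * (a3 * (a4 * (a5 * (a6 * (a7 * (a8 * (y))))))))) = 0" "a0 * (a1 * (a2 * (a3 * (a4 * (a5 * (a6 * (a7 * (a8 * (y))))))))) + (a0 * (a1 * (a2 * (a3 * (a4 * (a5 * (a6 * (a7 * (a8 * (n))))))))) + r) = r" "a0 * (a1 * (a2 * (a3 * (a4 * (a5 * (a6 * (a7 * (a8 * (n))))))))) + (a0 * (a1 * (a2 * (a3 * (a4 * (a5 * (a6 * (a7 * (a8 * (y))))))))) + r) = r"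
  using assms by (simp_all add: algebra_simps)

lemma commute_gen:
  fixes A Q0 Q1 Q2 :: "'g::ring_1"
  assumes r0: "\<And>x. Q0 * (A * x) = A*(A*(Q0*x)) - 2*(A*(Q1*x)) + 6*(Q2*x)"
  and r1: "\<And>x. Q1 * (A * x) = 3*(Q0*x) + A*(Q2*x)"
  and r2: "\<And>x. Q2 * (A * x) = - (A*(Q0*x)) + 3*(Q1*x)"
  and r3: "\<And>x. Q1 * (Q0 * x) = 2*(Q2*(Q1*x)) - 2*(Q0*(Q2*x))"
  and r4: "\<And>x. Q2 * (Q0 * x) = Q0*(Q1*x) + A*(Q0*(Q2*x)) - 2*(Q1*(Q2*x))"
  and n: "n = - y"
  and sS: "s \<in> {A, Q0, Q1, Q2}"
  shows "(Q0 * Q0 + A * Q0 * Q1 - 2 * Q1 * Q1 + A^2 * Q0 * Q2 - 2 * A * Q1 * Q2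
           + 4 * Q2 * Q2) * (s * y) - s * ((Q0 * Q0 + A * Q0 * Q1 - 2 * Q1 * Q1 + A^2 * Q0 * Q2 - 2 * A * Q1 * Q2
           + 4 * Q2 * Q2) * y) = 0"
proof -
  have ny: "- y = n" using n by simp
  have nn: "- n = y" using n by simp
  show ?thesis
  using sS apply (elim insertE emptyE)
  apply(simp_all only:)
  apply (simp_all only: power2_eq_square)
  apply (simp_all only: distrib_left distrib_right diff_conv_add_uminus minus_add_distrib minus_minus
     mult_minus_left mult_minus_right[symmetric] mult.assoc r0 r1 r2 r3 r4
     num_comm mult_numeral_left_semiring_numeral mult_num_simps ny nn
     numeral_Bit0 numeral_Bit1 numeral_One mult_1_left)
  apply (simp_all only: add_ac canc[OF n] add_0_left add_0_right)
  done
qed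

lemma center_gen:
  fixes z :: "'g::ring_1"
  assumes "\<And>s. s \<in> S \<Longrightarrow> z * s = s * z"
  shows "x \<in> gen_ring S \<Longrightarrow> z * x = x * z"
proof (induction rule: gen_ring.induct)
  case (gen_base x) then show ?case using assms by blast
next
  case gen_one then show ?case by simp
next
  case (gen_add x y) then show ?case by (simp add: algebra_simps)
next
  case (gen_neg x) then show ?case by simp
next
  case (gen_mult x y) then show ?case by (metis mult.assoc)
qed

theorem mainTheorem2:
  fixes A Q0 Q1 Q2 :: "'g::ring_1"
  assumes comm0: "Q0 * A = A^2 * Q0 - 2 * A * Q1 + 6 * Q2"
    and comm1: "Q1 * A = 3 * Q0 + A * Q2"
    and comm2: "Q2 * A = - A * Q0 + 3 * Q1"
    and adem1: "Q1 * Q0 = 2 * Q2 * Q1 - 2 * Q0 * Q2"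
    and adem2: "Q2 * Q0 = Q0 * Q1 + A * Q0 * Q2 - 2 * Q1 * Q2"
    and generated: "gen_ring {A, Q0, Q1, Q2} = UNIV"
  shows "Q0 * Q0 + A * Q0 * Q1 - 2 * Q1 * Q1 + A^2 * Q0 * Q2 - 2 * A * Q1 * Q2
           + 4 * Q2 * Q2 \<in> ring_center"
proof -
  have r0: "Q0 * (A * x) = A*(A*(Q0*x)) - 2*(A*(Q1*x)) + 6*(Q2*x)" for x
    by (subst mult.assoc[symmetric], subst comm0) (simp add: power2_eq_square algebra_simps)
  have r1: "Q1 * (A * x) = 3*(Q0*x) + A*(Q2*x)" for x
    by (subst mult.assoc[symmetric], subst comm1) (simp add: algebra_simps)
  have r2: "Q2 * (A * x) = - (A*(Q0*x)) + 3*(Q1*x)" for x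
    by (subst mult.assoc[symmetric], subst comm2) (simp add: algebra_simps)
  have r3: "Q1 * (Q0 * x) = 2*(Q2*(Q1*x)) - 2*(Q0*(Q2*x))" for x
    by (subst mult.assoc[symmetric], subst adem1) (simp add: algebra_simps)
  have r4: "Q2 * (Q0 * x) = Q0*(Q1*x) + A*(Q0*(Q2*x)) - 2*(Q1*(Q2*x))" for x
    by (subst mult.assoc[symmetric], subst adem2) (simp add: algebra_simps)
  let ?P = "Q0 * Q0 + A * Q0 * Q1 - 2 * Q1 * Q1 + A^2 * Q0 * Q2 - 2 * A * Q1 * Q2
           + 4 * Q2 * Q2"
  have "?P * s = s * ?P" if "s \<in> {A, Q0, Q1, Q2}" for s
    using commute_gen[OF r0 r1 r2 r3 r4, of "-1" 1 s] that by simp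
  then have "?P * x = x * ?P" for x
    using center_gen[of "{A, Q0, Q1, Q2}" ?P x] generated by auto
  then show ?thesis by (simp add: ring_center_def)
qed

end
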